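(* Let $A$ be a random variable with values in $\{u,v\}$, $\mathbb{P}(A=u)=p_u$, $\mathbb{P}(A=v)=p_v$, $p_u+p_v=1$, and let $(U,V)$ be a random vector independent of $A$ that is bivariate normal with means $\mu_u<0$, $\mu_v<0$, standard deviations $\sigma_u,\sigma_v>0$, and correlation $\rho$. For $z_u,z_v\in\mathbb{R}$ let \[g(z_u,z_v)=p_u\,\mathbb{P}(U>z_u)\,\mathbb{E}[U+V\mid U>z_u]+p_v\,\mathbb{P}(V>z_v)\,\mathbb{E}[U+V\mid V>z_v].\] Define \[\rho_1=\left[\left(\frac{-\mu_u}{\sigma_u}\right)M\left(\frac{-\mu_u}{\sigma_u}\right)\left(1+\frac{\mu_v}{\mu_u}\right)-1\right]\frac{\sigma_u}{\sigma_v},\qquad \rho_2=\left[\left(\frac{-\mu_v}{\sigma_v}\right)M\left(\frac{-\mu_v}{\sigma_v}\right)\left(1+\frac{\mu_u}{\mu_v}\right)-1\right]\frac{\sigma_v}{\sigma_u}.\] If $-1\le\rho<\min(\rho_1,\rho_2)$, then $g(0,0)<0$.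
   Context: $\phi,\Phi$ are the standard normal density and CDF and $M(\alpha)=(1-\Phi(\alpha))/\phi(\alpha)$ is the Mills ratio. $g(z_u,z_v)=\mathbb{E}[D(U+V)]$ with $D=\mathbb{I}(A=u,U>z_u)+\mathbb{I}(A=v,V>z_v)$ is the long-run average overall performance when innovations with primary dimension $u$ (resp. $v$) are adopted iff their effect exceeds the hurdle $z_u$ (resp. $z_v$). *)

theory Defs
  imports "HOL-Probability.Probability"
begin

definition phi :: "real \<Rightarrow> real" where
  "phi x = std_normal_density x"

definition Phi :: "real \<Rightarrow> real" where
  "Phi x = measure (density lborel std_normal_density) {..x}"

definition Mills :: "real \<Rightarrow> real" where
  "Mills a = (1 - Phi a) / phi a"

definition std_normal_measure :: "real measure" where
  "std_normal_measure = density lborel std_normal_density"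

text \<open>This covers the degenerate cases rho = -1, 1 as well.\<close>
definition bivariate_normal :: "real \<Rightarrow> real \<Rightarrow> real \<Rightarrow> real \<Rightarrow> real \<Rightarrow> (real \<times> real) measure" where
  "bivariate_normal mu_u mu_v s_u s_v rho =
     distr (std_normal_measure \<Otimes>\<^sub>M std_normal_measure) borel
       (\<lambda>(x, y). (mu_u + s_u * x, mu_v + s_v * (rho * x + sqrt (1 - rho\<^sup>2) * y)))"

end

theory Submission
  imports Defs
begin


abbreviation "NN \<equiv> std_normal_measure \<Otimes>\<^sub>M std_normal_measure"

lemma N_prob: "prob_space std_normal_measure"
  unfolding std_normal_measure_def by (rule prob_space_normal_density) simp

lemma N_sets[measurable_cong, simp]: "sets std_normal_measure = sets borel"
  unfolding std_normal_measure_def by simp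

lemma N_space[simp]: "space std_normal_measure = UNIV"
  unfolding std_normal_measure_def by simp

lemma NN_pair: "pair_prob_space std_normal_measure std_normal_measure"
  using N_prob
  by (simp add: pair_prob_space_def pair_sigma_finite_def prob_space_imp_sigma_finite)

lemma NN_prob: "prob_space NN"
proof -
  interpret pair_prob_space std_normal_measure std_normal_measure by (rule NN_pair)
  show ?thesis by (rule P.prob_space_axioms)
qed

lemma NN_sets[measurable_cong]: "sets NN = sets (borel \<Otimes>\<^sub>M borel)"
  by (intro sets_pair_measure_cong) simp_all

lemma N_integral:
  assumes [measurable]: "f \<in> borel_measurable borel"
  shows "integral\<^sup>L std_normal_measure f = (\<integral>x. std_normal_density x * f x \<partial>lborel)"
  unfolding std_normal_measure_def by (subst integral_density) auto

lemma N_integrable: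
  assumes [measurable]: "f \<in> borel_measurable borel"
  shows "integrable std_normal_measure f = integrable lborel (\<lambda>x. std_normal_density x * f x)"
  unfolding std_normal_measure_def by (subst integrable_density) auto

lemma N_tail: "1 - Phi a = measure std_normal_measure {a<..}"
proof -
  interpret prob_space std_normal_measure by (rule N_prob)
  have "measure std_normal_measure (space std_normal_measure - {..a}) = 1 - measure std_normal_measure {..a}"
    by (rule prob_compl) simp
  moreover have "space std_normal_measure - {..a} = {a<..}" by auto
  ultimately show ?thesis unfolding Phi_def std_normal_measure_def by simp
qed

lemma N_id_int: "integrable std_normal_measure (\<lambda>x. x)"
  using integrable_std_normal_moment[of 1] by (subst N_integrable) auto

lemma N_id_integral: "(\<integral>x. x \<partial>std_normal_measure) = 0"
  using integral_std_normal_moment_odd[of 0] by (subst N_integral) auto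

lemma distr_fst: "distr NN std_normal_measure fst = std_normal_measure"
proof -
  interpret prob_space std_normal_measure by (rule N_prob)
  show ?thesis by (rule distr_pair_fst)
qed

lemma distr_snd: "distr NN std_normal_measure snd = std_normal_measure"
proof -
  interpret pair_prob_space std_normal_measure std_normal_measure by (rule NN_pair)
  have "distr NN std_normal_measure snd = distr (distr NN NN (\<lambda>(x,y). (y,x))) std_normal_measure snd"
    using distr_pair_swap by simp
  also have "\<dots> = distr NN std_normal_measure (snd \<circ> (\<lambda>(x,y). (y,x)))"
    by (rule distr_distr) auto
  also have "snd \<circ> (\<lambda>(x,y). (y,x)) = fst" by auto
  finally show ?thesis using distr_fst by simp
qed

lemma NN_integral_fst:
  fixes f :: "real \<Rightarrow> real"
  assumes [measurable]: "f \<in> borel_measurable borel"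
  shows "(\<integral>z. f (fst z) \<partial>NN) = integral\<^sup>L std_normal_measure f"
    and "integrable NN (\<lambda>z. f (fst z)) = integrable std_normal_measure f"
proof -
  have "integral\<^sup>L std_normal_measure f = integral\<^sup>L (distr NN std_normal_measure fst) f"
    using distr_fst by simp
  also have "\<dots> = (\<integral>z. f (fst z) \<partial>NN)"
    by (rule integral_distr[where g=fst and M=NN and N=std_normal_measure and f=f]) (auto simp: measurable_cong_sets[OF N_sets refl])
  finally show "(\<integral>z. f (fst z) \<partial>NN) = integral\<^sup>L std_normal_measure f" by simp
  have "integrable std_normal_measure f = integrable (distr NN std_normal_measure fst) f"
    using distr_fst by simp
  also have "\<dots> = integrable NN (\<lambda>z. f (fst z))"
    by (rule integrable_distr_eq) (auto simp: measurable_cong_sets[OF N_sets refl])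
  finally show "integrable NN (\<lambda>z. f (fst z)) = integrable std_normal_measure f" by simp
qed

lemma NN_integral_snd:
  fixes f :: "real \<Rightarrow> real"
  assumes [measurable]: "f \<in> borel_measurable borel"
  shows "(\<integral>z. f (snd z) \<partial>NN) = integral\<^sup>L std_normal_measure f"
    and "integrable NN (\<lambda>z. f (snd z)) = integrable std_normal_measure f"
proof -
  have "integral\<^sup>L std_normal_measure f = integral\<^sup>L (distr NN std_normal_measure snd) f"
    using distr_snd by simp
  also have "\<dots> = (\<integral>z. f (snd z) \<partial>NN)"
    by (rule integral_distr[where g=snd and M=NN and N=std_normal_measure and f=f]) (auto simp: measurable_cong_sets[OF N_sets refl])
  finally show "(\<integral>z. f (snd z) \<partial>NN) = integral\<^sup>L std_normal_measure f" by simp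
  have "integrable std_normal_measure f = integrable (distr NN std_normal_measure snd) f"
    using distr_snd by simp
  also have "\<dots> = integrable NN (\<lambda>z. f (snd z))"
    by (rule integrable_distr_eq) (auto simp: measurable_cong_sets[OF N_sets refl])
  finally show "integrable NN (\<lambda>z. f (snd z)) = integrable std_normal_measure f" by simp
qed

lemma std_normal_deriv:
  "((\<lambda>x. std_normal_density x) has_real_derivative (- x * std_normal_density x)) (at x)"
  unfolding std_normal_density_def
  by (auto intro!: derivative_eq_intros simp: field_simps power2_eq_square)

lemma std_normal_tendsto_top: "(std_normal_density \<longlongrightarrow> 0) at_top"
proof -
  have lim: "LIM x at_top. x\<^sup>2 / 2 :> (at_top :: real filter)"
  proof (rule filterlim_at_top_mono[OF filterlim_ident])
    show "\<forall>\<^sub>F x in at_top. x \<le> x\<^sup>2 / (2::real)"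
      using eventually_ge_at_top[of "2::real"]
    proof eventually_elim
      case (elim x)
      have "2 * x \<le> x * x" using mult_right_mono[of 2 x x] elim by simp
      then show ?case by (simp add: power2_eq_square)
    qed
  qed
  have "((\<lambda>x::real. exp (- x\<^sup>2 / 2)) \<longlongrightarrow> 0) at_top"
  proof (rule filterlim_compose[OF exp_at_bot])
    show "LIM x at_top. - x\<^sup>2 / 2 :> (at_bot :: real filter)"
      using lim by (simp add: filterlim_uminus_at_bot)
  qed
  then have "((\<lambda>x::real. 1 / sqrt (2 * pi) * exp (- x\<^sup>2 / 2)) \<longlongrightarrow> 1 / sqrt (2 * pi) * 0) at_top"
    by (rule tendsto_mult[OF tendsto_const])
  then show ?thesis unfolding std_normal_density_def[abs_def] by simp
qed

lemma tail_moment: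
  "(\<integral>x. std_normal_density x * x * indicator {t<..} x \<partial>lborel) = std_normal_density t"
proof -
  have int: "set_integrable lborel (einterval (ereal t) \<infinity>) (\<lambda>x. std_normal_density x * x)"
    unfolding set_integrable_def
    using integrable_std_normal_moment[of 1]
    by (intro integrable_mult_indicator) auto
  have "(LBINT x=ereal t..\<infinity>. std_normal_density x * x) = 0 - (- std_normal_density t)"
  proof (rule interval_integral_FTC_integrable[where F="\<lambda>x. - std_normal_density x"])
    show "((\<lambda>x. - std_normal_density x) has_vector_derivative std_normal_density x * x) (at x)" for x
      using std_normal_deriv[of x]
      by (auto simp: has_real_derivative_iff_has_vector_derivative[symmetric] intro!: derivative_eq_intros)
    show "isCont (\<lambda>x. std_normal_density x * x) x" for x
      unfolding std_normal_density_def by (intro continuous_intros) auto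
    show "(((\<lambda>x. - std_normal_density x) \<circ> real_of_ereal) \<longlongrightarrow> - std_normal_density t) (at_right (ereal t))"
      unfolding ereal_tendsto_simps
      by (intro tendsto_intros) (auto simp: std_normal_density_def intro!: tendsto_intros)
    show "(((\<lambda>x. - std_normal_density x) \<circ> real_of_ereal) \<longlongrightarrow> 0) (at_left \<infinity>)"
      unfolding ereal_tendsto_simps
      using tendsto_minus[OF std_normal_tendsto_top] by simp
  qed (use int in auto)
  then show ?thesis
    by (simp add: interval_integral_to_infinity_eq set_lebesgue_integral_def mult.commute mult.left_commute)
qed


lemma std_normal_even: "std_normal_density (- x) = std_normal_density x"
  by (simp add: std_normal_density_def)

lemma head_moment:
  "(\<integral>x. std_normal_density x * x * indicator {..<t} x \<partial>lborel) = - std_normal_density t"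
proof -
  have "(\<integral>x. std_normal_density x * x * indicator {..<t} x \<partial>lborel)
     = \<bar>-1\<bar> *\<^sub>R (\<integral>x. std_normal_density (0 + -1 * x) * (0 + -1 * x) * indicator {..<t} (0 + -1 * x) \<partial>lborel)"
    by (rule lborel_integral_real_affine) simp
  also have "\<dots> = (\<integral>x. std_normal_density (0 + -1 * x) * (0 + -1 * x) * indicator {..<t} (0 + -1 * x) \<partial>lborel)"
    by simp
  also have "\<dots> = (\<integral>x. - (std_normal_density x * x * indicator {-t<..} x) \<partial>lborel)"
    by (intro Bochner_Integration.integral_cong) (auto simp: std_normal_even split: split_indicator)
  also have "\<dots> = - std_normal_density (-t)"
    using tail_moment[of "-t"] by simp
  finally show ?thesis by (simp add: std_normal_even)
qed

lemma gauss_conv: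
  assumes "\<alpha> > 0" "\<alpha>\<^sup>2 + \<beta>\<^sup>2 = 1"
  shows "(\<integral>s. std_normal_density s * std_normal_density ((b - \<beta> * s) / \<alpha>) \<partial>lborel) = \<alpha> * std_normal_density b"
proof -
  have pt: "std_normal_density s * std_normal_density ((b - \<beta> * s) / \<alpha>)
      = \<alpha> * std_normal_density b * normal_density (\<beta> * b) \<alpha> s" for s
  proof -
    have sq: "sqrt (2 * pi * \<alpha>\<^sup>2) = sqrt (2 * pi) * \<alpha>"
      using assms(1) by (simp add: real_sqrt_mult)
    have ex: "- s\<^sup>2 / 2 + - ((b - \<beta> * s) / \<alpha>)\<^sup>2 / 2 = - b\<^sup>2 / 2 + - (s - \<beta> * b)\<^sup>2 / (2 * \<alpha>\<^sup>2)"
    proof -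
      have n1: "\<alpha>\<^sup>2 * s\<^sup>2 + (b - \<beta> * s)\<^sup>2 = (\<alpha>\<^sup>2 + \<beta>\<^sup>2) * s\<^sup>2 + b\<^sup>2 - 2 * b * \<beta> * s"
        by (simp add: power2_eq_square algebra_simps)
      have n2: "\<alpha>\<^sup>2 * b\<^sup>2 + (s - \<beta> * b)\<^sup>2 = (\<alpha>\<^sup>2 + \<beta>\<^sup>2) * b\<^sup>2 + s\<^sup>2 - 2 * b * \<beta> * s"
        by (simp add: power2_eq_square algebra_simps)
      have num: "\<alpha>\<^sup>2 * s\<^sup>2 + (b - \<beta> * s)\<^sup>2 = \<alpha>\<^sup>2 * b\<^sup>2 + (s - \<beta> * b)\<^sup>2"
        unfolding n1 n2 assms(2) by simp
      have l: "- s\<^sup>2 / 2 + - ((b - \<beta> * s) / \<alpha>)\<^sup>2 / 2 = - (\<alpha>\<^sup>2 * s\<^sup>2 + (b - \<beta> * s)\<^sup>2) / (2 * \<alpha>\<^sup>2)"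
        using assms(1) by (simp add: field_simps power2_eq_square)
      have r: "- b\<^sup>2 / 2 + - (s - \<beta> * b)\<^sup>2 / (2 * \<alpha>\<^sup>2) = - (\<alpha>\<^sup>2 * b\<^sup>2 + (s - \<beta> * b)\<^sup>2) / (2 * \<alpha>\<^sup>2)"
        using assms(1) by (simp add: field_simps power2_eq_square)
      show ?thesis unfolding l r num ..
    qed
    have E: "exp (- s\<^sup>2 / 2) * exp (- ((b - \<beta> * s) / \<alpha>)\<^sup>2 / 2) = exp (- b\<^sup>2 / 2) * exp (- (s - \<beta> * b)\<^sup>2 / (2 * \<alpha>\<^sup>2))"
      by (simp only: mult_exp_exp ex)
    have "std_normal_density s * std_normal_density ((b - \<beta> * s) / \<alpha>)
        = (1 / sqrt (2 * pi)) * (1 / sqrt (2 * pi)) * (exp (- s\<^sup>2 / 2) * exp (- ((b - \<beta> * s) / \<alpha>)\<^sup>2 / 2))"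
      unfolding std_normal_density_def by (simp only: ac_simps)
    also have "\<dots> = (1 / sqrt (2 * pi)) * (1 / sqrt (2 * pi)) * (exp (- b\<^sup>2 / 2) * exp (- (s - \<beta> * b)\<^sup>2 / (2 * \<alpha>\<^sup>2)))"
      unfolding E ..
    also have "\<dots> = \<alpha> * std_normal_density b * normal_density (\<beta> * b) \<alpha> s"
      unfolding std_normal_density_def normal_density_def sq
      using assms(1) by (simp add: field_simps)
    finally show ?thesis .
  qed
  show ?thesis
    using assms(1) by (simp add: pt integral_normal_density)
qed


lemma gauss_conv_neg:
  assumes "\<alpha> < 0" "\<alpha>\<^sup>2 + \<beta>\<^sup>2 = 1"
  shows "(\<integral>s. std_normal_density s * (- std_normal_density ((b - \<beta> * s) / (- \<alpha>))) \<partial>lborel) = \<alpha> * std_normal_density b"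
proof -
  have c: "(- \<alpha>)\<^sup>2 + \<beta>\<^sup>2 = 1" using assms by simp
  have pos: "- \<alpha> > 0" using assms by simp
  have "(\<integral>s. std_normal_density s * (- std_normal_density ((b - \<beta> * s) / (- \<alpha>))) \<partial>lborel)
    = (\<integral>s. - (std_normal_density s * std_normal_density ((b - \<beta> * s) / (- \<alpha>))) \<partial>lborel)"
    by (rule Bochner_Integration.integral_cong) auto
  also have "\<dots> = - (\<integral>s. std_normal_density s * std_normal_density ((b - \<beta> * s) / (- \<alpha>)) \<partial>lborel)"
    by (rule Bochner_Integration.integral_minus)
  also have "\<dots> = - ((- \<alpha>) * std_normal_density b)"
    using gauss_conv[OF pos c] by (rule arg_cong)
  finally show ?thesis by simp
qed

lemma NN_space: "space NN = UNIV"
  by (simp add: space_pair_measure)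

lemma NN_fst_int: "integrable NN fst"
proof -
  have e: "integrable NN (\<lambda>z. (\<lambda>x::real. x) (fst z)) = integrable std_normal_measure (\<lambda>x::real. x)"
    by (rule NN_integral_fst(2)) simp
  show ?thesis using N_id_int unfolding e[symmetric] by (simp only:)
qed

lemma NN_snd_int: "integrable NN snd"
proof -
  have e: "integrable NN (\<lambda>z. (\<lambda>x::real. x) (snd z)) = integrable std_normal_measure (\<lambda>x::real. x)"
    by (rule NN_integral_snd(2)) simp
  show ?thesis using N_id_int unfolding e[symmetric] by (simp only:)
qed

lemma half_sets: "{z. b < \<alpha> * fst z + \<beta> * snd z} \<in> sets NN"
proof -
  have "{z \<in> space NN. b < \<alpha> * fst z + \<beta> * snd z} \<in> sets NN" by measurable
  then show ?thesis by (simp add: NN_space)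
qed

lemma inner_K:
  assumes "\<alpha>\<^sup>2 + \<beta>\<^sup>2 = 1"
  shows "(\<integral>x. x * indicator {z. b < \<alpha> * fst z + \<beta> * snd z} (x, y) \<partial>std_normal_measure)
     = (if \<alpha> > 0 then std_normal_density ((b - \<beta> * y) / \<alpha>)
        else if \<alpha> < 0 then - std_normal_density ((b - \<beta> * y) / (- \<alpha>)) else 0)"
proof -
  have "(\<integral>x. x * indicator {z. b < \<alpha> * fst z + \<beta> * snd z} (x, y) \<partial>std_normal_measure)
     = (\<integral>x. std_normal_density x * (x * indicator {z. b < \<alpha> * fst z + \<beta> * snd z} (x, y)) \<partial>lborel)"
    by (rule N_integral) measurable
  also have "\<dots> = (if \<alpha> > 0 then std_normal_density ((b - \<beta> * y) / \<alpha>)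
        else if \<alpha> < 0 then - std_normal_density ((b - \<beta> * y) / (- \<alpha>)) else 0)"
  proof (cases "\<alpha> > 0")
    case True
    have "(\<integral>x. std_normal_density x * (x * indicator {z. b < \<alpha> * fst z + \<beta> * snd z} (x, y)) \<partial>lborel)
       = (\<integral>x. std_normal_density x * x * indicator {(b - \<beta> * y) / \<alpha><..} x \<partial>lborel)"
    proof (intro Bochner_Integration.integral_cong refl)
      fix x
      have e1: "(b - \<beta> * y) / \<alpha> < x \<longleftrightarrow> b - \<beta> * y < x * \<alpha>"
        by (rule pos_divide_less_eq[OF True])
      have e2: "x * \<alpha> = \<alpha> * x" by (rule mult.commute)
      have "b < \<alpha> * x + \<beta> * y \<longleftrightarrow> (b - \<beta> * y) / \<alpha> < x"
        using e1 e2 by linarith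
      then show "std_normal_density x * (x * indicator {z. b < \<alpha> * fst z + \<beta> * snd z} (x, y))
          = std_normal_density x * x * indicator {(b - \<beta> * y) / \<alpha><..} x"
        by (simp add: indicator_def)
    qed
    then show ?thesis using True tail_moment by simp
  next
    case False
    show ?thesis
    proof (cases "\<alpha> < 0")
      case True
      have "(\<integral>x. std_normal_density x * (x * indicator {z. b < \<alpha> * fst z + \<beta> * snd z} (x, y)) \<partial>lborel)
         = (\<integral>x. std_normal_density x * x * indicator {..<(b - \<beta> * y) / \<alpha>} x \<partial>lborel)"
      proof (intro Bochner_Integration.integral_cong refl)
        fix x
        have e1: "x < (b - \<beta> * y) / \<alpha> \<longleftrightarrow> b - \<beta> * y < x * \<alpha>"
          by (rule neg_less_divide_eq[OF True])
        have e2: "x * \<alpha> = \<alpha> * x" by (rule mult.commute)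
        have "b < \<alpha> * x + \<beta> * y \<longleftrightarrow> x < (b - \<beta> * y) / \<alpha>"
          using e1 e2 by linarith
        then show "std_normal_density x * (x * indicator {z. b < \<alpha> * fst z + \<beta> * snd z} (x, y))
            = std_normal_density x * x * indicator {..<(b - \<beta> * y) / \<alpha>} x"
          by (simp add: indicator_def)
      qed
      then show ?thesis using True head_moment
        by (simp add: std_normal_even)
    next
      case False2: False
      with False have a0: "\<alpha> = 0" by simp
      have "(\<integral>x. std_normal_density x * (x * indicator {z. b < \<alpha> * fst z + \<beta> * snd z} (x, y)) \<partial>lborel)
         = (\<integral>x. std_normal_density x * x ^ (2 * 0 + 1) * indicator {z. b < \<beta> * z} y \<partial>lborel)"
        using a0 by (intro Bochner_Integration.integral_cong refl) (simp add: indicator_def)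
      also have "\<dots> = (\<integral>x. std_normal_density x * x ^ (2 * 0 + 1) \<partial>lborel) * indicator {z. b < \<beta> * z} y"
        by (rule integral_mult_left_zero)
      also have "\<dots> = 0"
        by (simp only: integral_std_normal_moment_odd mult_zero_left)
      finally show ?thesis using a0 by simp
    qed
  qed
  finally show ?thesis .
qed

lemma L:
  assumes "\<alpha>\<^sup>2 + \<beta>\<^sup>2 = 1"
  shows "(\<integral>z. fst z * indicator {z. b < \<alpha> * fst z + \<beta> * snd z} z \<partial>NN) = \<alpha> * std_normal_density b"
proof -
  interpret pair_prob_space std_normal_measure std_normal_measure by (rule NN_pair)
  let ?S = "{z. b < \<alpha> * fst z + \<beta> * snd z}"
  have int: "integrable NN (\<lambda>z. indicator ?S z *\<^sub>R fst z)"
    by (rule integrable_mult_indicator[OF half_sets NN_fst_int])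
  have int': "integrable NN (case_prod (\<lambda>x y. x * indicator ?S (x, y)))"
    using int by (simp add: case_prod_beta' mult.commute)
  have "(\<integral>z. fst z * indicator ?S z \<partial>NN) = (\<integral>z. case_prod (\<lambda>x y. x * indicator ?S (x, y)) z \<partial>NN)"
    by (simp add: case_prod_beta')
  also have "\<dots> = (\<integral>x. (\<integral>y. x * indicator ?S (x, y) \<partial>std_normal_measure) \<partial>std_normal_measure)"
    using integral_fst'[OF int'] by simp
  also have "\<dots> = (\<integral>y. (\<integral>x. x * indicator ?S (x, y) \<partial>std_normal_measure) \<partial>std_normal_measure)"
    using Fubini_integral[OF int'] by simp
  also have "\<dots> = (\<integral>y. (if \<alpha> > 0 then std_normal_density ((b - \<beta> * y) / \<alpha>)
        else if \<alpha> < 0 then - std_normal_density ((b - \<beta> * y) / (- \<alpha>)) else 0) \<partial>std_normal_measure)"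
    by (simp only: inner_K[OF assms])
  also have "\<dots> = \<alpha> * std_normal_density b"
  proof (cases "\<alpha> > 0")
    case True
    then show ?thesis
      by (subst N_integral) (auto simp: gauss_conv[OF True assms])
  next
    case False
    show ?thesis
    proof (cases "\<alpha> < 0")
      case True
      have "(\<integral>y. (if \<alpha> > 0 then std_normal_density ((b - \<beta> * y) / \<alpha>)
        else if \<alpha> < 0 then - std_normal_density ((b - \<beta> * y) / (- \<alpha>)) else 0) \<partial>std_normal_measure)
        = (\<integral>y. - std_normal_density ((b - \<beta> * y) / (- \<alpha>)) \<partial>std_normal_measure)"
        by (rule Bochner_Integration.integral_cong) (use True in auto)
      also have "\<dots> = (\<integral>y. std_normal_density y * (- std_normal_density ((b - \<beta> * y) / (- \<alpha>))) \<partial>lborel)"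
        by (rule N_integral) measurable
      also have "\<dots> = \<alpha> * std_normal_density b"
        by (rule gauss_conv_neg[OF True assms])
      finally show ?thesis .
    next
      case False2: False
      with False show ?thesis by simp
    qed
  qed
  finally show ?thesis .
qed



lemma dist_fst: "distributed NN lborel fst (\<lambda>x. ennreal (std_normal_density x))"
  unfolding distributed_def
proof (intro conjI)
  have "distr NN lborel fst = distr NN std_normal_measure fst"
    by (rule distr_cong) simp_all
  then show "distr NN lborel fst = density lborel (\<lambda>x. ennreal (std_normal_density x))"
    using distr_fst by (simp add: std_normal_measure_def)
  show "fst \<in> measurable NN lborel"
    using measurable_fst[of std_normal_measure std_normal_measure]
    by (simp add: measurable_cong_sets[OF refl N_sets])
qed simp

lemma dist_snd: "distributed NN lborel snd (\<lambda>x. ennreal (std_normal_density x))"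
  unfolding distributed_def
proof (intro conjI)
  have "distr NN lborel snd = distr NN std_normal_measure snd"
    by (rule distr_cong) simp_all
  then show "distr NN lborel snd = density lborel (\<lambda>x. ennreal (std_normal_density x))"
    using distr_snd by (simp add: std_normal_measure_def)
  show "snd \<in> measurable NN lborel"
    using measurable_snd[of std_normal_measure std_normal_measure]
    by (simp add: measurable_cong_sets[OF refl N_sets])
qed simp

lemma indep_fst_snd: "prob_space.indep_var NN borel fst borel snd"
proof -
  interpret P: prob_space NN by (rule NN_prob)
  have m1: "fst \<in> measurable NN borel"
    using measurable_fst[of std_normal_measure std_normal_measure]
    by (simp add: measurable_cong_sets[OF refl N_sets])
  have m2: "snd \<in> measurable NN borel"
    using measurable_snd[of std_normal_measure std_normal_measure]
    by (simp add: measurable_cong_sets[OF refl N_sets])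
  have "distr NN borel fst = distr NN std_normal_measure fst"
    by (rule distr_cong) simp_all
  then have d1: "distr NN borel fst = std_normal_measure"
    using distr_fst by simp
  have "distr NN borel snd = distr NN std_normal_measure snd"
    by (rule distr_cong) simp_all
  then have d2: "distr NN borel snd = std_normal_measure"
    using distr_snd by simp
  have "distr NN (borel \<Otimes>\<^sub>M borel) (\<lambda>x. (fst x, snd x)) = distr NN NN (\<lambda>x. x)"
    by (rule distr_cong) (simp_all add: NN_sets)
  also have "\<dots> = NN" by (rule distr_id)
  finally have d3: "distr NN (borel \<Otimes>\<^sub>M borel) (\<lambda>x. (fst x, snd x)) = NN" .
  show ?thesis
    unfolding P.indep_var_distribution_eq using m1 m2 d1 d2 d3 by simp
qed


lemma dist_W:
  assumes "\<alpha>\<^sup>2 + \<beta>\<^sup>2 = 1"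
  shows "distributed NN lborel (\<lambda>z. \<alpha> * fst z + \<beta> * snd z) (\<lambda>x. ennreal (std_normal_density x))"
proof -
  interpret P: prob_space NN by (rule NN_prob)
  show ?thesis
  proof (cases "\<beta> = 0")
    case True
    then have "\<alpha>\<^sup>2 = 1" using assms by simp
    then have a1: "\<bar>\<alpha>\<bar> = 1" using power2_eq_1_iff by fastforce
    then have a0: "\<alpha> \<noteq> 0" by auto
    have "distributed NN lborel (\<lambda>z. 0 + \<alpha> * fst z) (\<lambda>x. ennreal (normal_density (0 + \<alpha> * 0) (\<bar>\<alpha>\<bar> * 1) x))"
      by (rule P.normal_density_affine[OF dist_fst _ a0]) simp
    moreover have "(\<lambda>z. \<alpha> * fst z + \<beta> * snd z) = (\<lambda>z. 0 + \<alpha> * fst z)"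
      using True by simp
    ultimately show ?thesis using a1 by simp
  next
    case b0: False
    show ?thesis
    proof (cases "\<alpha> = 0")
      case True
      then have "\<beta>\<^sup>2 = 1" using assms by simp
      then have a1: "\<bar>\<beta>\<bar> = 1" using power2_eq_1_iff by fastforce
      have "distributed NN lborel (\<lambda>z. 0 + \<beta> * snd z) (\<lambda>x. ennreal (normal_density (0 + \<beta> * 0) (\<bar>\<beta>\<bar> * 1) x))"
        by (rule P.normal_density_affine[OF dist_snd _ b0]) simp
      moreover have "(\<lambda>z. \<alpha> * fst z + \<beta> * snd z) = (\<lambda>z. 0 + \<beta> * snd z)"
        using True by simp
      ultimately show ?thesis using a1 by simp
    next
      case a0: False
      have X: "distributed NN lborel (\<lambda>z. 0 + \<alpha> * fst z) (\<lambda>x. ennreal (normal_density (0 + \<alpha> * 0) (\<bar>\<alpha>\<bar> * 1) x))"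
        by (rule P.normal_density_affine[OF dist_fst _ a0]) simp
      have Y: "distributed NN lborel (\<lambda>z. 0 + \<beta> * snd z) (\<lambda>x. ennreal (normal_density (0 + \<beta> * 0) (\<bar>\<beta>\<bar> * 1) x))"
        by (rule P.normal_density_affine[OF dist_snd _ b0]) simp
      have "P.indep_var borel ((\<lambda>x. 0 + \<alpha> * x) \<circ> fst) borel ((\<lambda>x. 0 + \<beta> * x) \<circ> snd)"
        by (rule P.indep_var_compose[OF indep_fst_snd]) simp_all
      then have I: "P.indep_var borel (\<lambda>z. 0 + \<alpha> * fst z) borel (\<lambda>z. 0 + \<beta> * snd z)"
        by (simp add: comp_def)
      have "distributed NN lborel (\<lambda>z. (0 + \<alpha> * fst z) + (0 + \<beta> * snd z))
          (\<lambda>x. ennreal (normal_density (0 + \<alpha> * 0 + (0 + \<beta> * 0)) (sqrt ((\<bar>\<alpha>\<bar> * 1)\<^sup>2 + (\<bar>\<beta>\<bar> * 1)\<^sup>2)) x))"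
        by (rule P.add_indep_normal[OF I _ _ X Y]) (use a0 b0 in simp_all)
      moreover have "sqrt ((\<bar>\<alpha>\<bar> * 1)\<^sup>2 + (\<bar>\<beta>\<bar> * 1)\<^sup>2) = 1" using assms by simp
      ultimately show ?thesis by simp
    qed
  qed
qed

lemma P_half:
  assumes "\<alpha>\<^sup>2 + \<beta>\<^sup>2 = 1"
  shows "measure NN {z. b < \<alpha> * fst z + \<beta> * snd z} = 1 - Phi b"
proof -
  have D: "distributed NN lborel (\<lambda>z. \<alpha> * fst z + \<beta> * snd z) (\<lambda>x. ennreal (std_normal_density x))"
    by (rule dist_W[OF assms])
  have m: "(\<lambda>z. \<alpha> * fst z + \<beta> * snd z) \<in> measurable NN lborel"
    using D by (simp add: distributed_def)
  have "measure NN {z. b < \<alpha> * fst z + \<beta> * snd z}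
      = measure NN ((\<lambda>z. \<alpha> * fst z + \<beta> * snd z) -` {b<..} \<inter> space NN)"
    by (simp add: NN_space vimage_def)
  also have "\<dots> = measure (distr NN lborel (\<lambda>z. \<alpha> * fst z + \<beta> * snd z)) {b<..}"
    by (rule measure_distr[symmetric, OF m]) simp
  also have "\<dots> = measure std_normal_measure {b<..}"
    using D by (simp add: distributed_def std_normal_measure_def)
  finally show ?thesis using N_tail by simp
qed

lemma L2:
  assumes "\<alpha>\<^sup>2 + \<beta>\<^sup>2 = 1"
  shows "(\<integral>z. snd z * indicator {z. b < \<alpha> * fst z + \<beta> * snd z} z \<partial>NN) = \<beta> * std_normal_density b"
proof -
  interpret pair_prob_space std_normal_measure std_normal_measure by (rule NN_pair)
  have m: "(\<lambda>(x, y). (y, x)) \<in> measurable NN NN" by measurable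
  have "(\<integral>z. snd z * indicator {z. b < \<alpha> * fst z + \<beta> * snd z} z \<partial>NN)
      = (\<integral>z. snd z * indicator {z. b < \<alpha> * fst z + \<beta> * snd z} z \<partial>(distr NN NN (\<lambda>(x, y). (y, x))))"
    using distr_pair_swap by simp
  also have "\<dots> = (\<integral>z. snd ((\<lambda>(x, y). (y, x)) z) * indicator {z. b < \<alpha> * fst z + \<beta> * snd z} ((\<lambda>(x, y). (y, x)) z) \<partial>NN)"
    by (rule integral_distr[OF m]) (simp add: borel_measurable_indicator' half_sets)
  also have "\<dots> = (\<integral>z. fst z * indicator {z. b < \<beta> * fst z + \<alpha> * snd z} z \<partial>NN)"
    by (rule Bochner_Integration.integral_cong) (auto simp: indicator_def split: prod.splits)
  also have "\<dots> = \<beta> * std_normal_density b"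
    by (rule L) (use assms in simp)
  finally show ?thesis .
qed



lemma cancel_meas:
  assumes "prob_space M" "S \<in> sets M"
  shows "p * measure M S * ((\<integral>\<omega>. f \<omega> * indicator S \<omega> \<partial>M) / measure M S) = p * (\<integral>\<omega>. f \<omega> * indicator S \<omega> \<partial>M)"
proof (cases "measure M S = 0")
  case True
  interpret prob_space M by fact
  have "emeasure M S = 0" using True assms(2) by (simp add: emeasure_eq_measure)
  then have "S \<in> null_sets M" using assms(2) by (simp add: null_sets_def)
  then have "AE x in M. x \<notin> S" by (rule AE_not_in)
  then have "AE x in M. f x * indicator S x = 0" by eventually_elim simp
  then have "(\<integral>\<omega>. f \<omega> * indicator S \<omega> \<partial>M) = 0" by (rule integral_eq_zero_AE)
  then show ?thesis by simp
qed simp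

lemma lin:
  assumes S: "S \<in> sets NN"
  shows "(\<integral>z. (k0 + k1 * fst z + k2 * snd z) * indicator S z \<partial>NN)
     = k0 * measure NN S + k1 * (\<integral>z. fst z * indicator S z \<partial>NN) + k2 * (\<integral>z. snd z * indicator S z \<partial>NN)"
proof -
  interpret P: prob_space NN by (rule NN_prob)
  have i0: "integrable NN (\<lambda>z. indicator S z :: real)"
    using S by (intro integrable_real_indicator) (simp_all add: P.emeasure_eq_measure)
  have i1: "integrable NN (\<lambda>z. fst z * indicator S z)"
    using integrable_mult_indicator[OF S NN_fst_int] by (simp add: mult.commute)
  have i2: "integrable NN (\<lambda>z. snd z * indicator S z)"
    using integrable_mult_indicator[OF S NN_snd_int] by (simp add: mult.commute)
  have "(\<integral>z. (k0 + k1 * fst z + k2 * snd z) * indicator S z \<partial>NN)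
     = (\<integral>z. (k0 * indicator S z + k1 * (fst z * indicator S z)) + k2 * (snd z * indicator S z) \<partial>NN)"
    by (rule Bochner_Integration.integral_cong) (simp_all add: algebra_simps)
  also have "\<dots> = (\<integral>z. k0 * indicator S z + k1 * (fst z * indicator S z) \<partial>NN) + (\<integral>z. k2 * (snd z * indicator S z) \<partial>NN)"
    by (rule Bochner_Integration.integral_add) (use i0 i1 i2 in auto)
  also have "(\<integral>z. k0 * indicator S z + k1 * (fst z * indicator S z) \<partial>NN)
      = (\<integral>z. k0 * indicator S z \<partial>NN) + (\<integral>z. k1 * (fst z * indicator S z) \<partial>NN)"
    by (rule Bochner_Integration.integral_add) (use i0 i1 in auto)
  also have "(\<integral>z. k0 * indicator S z \<partial>NN) = k0 * measure NN S"
    using S by simp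
  also have "(\<integral>z. k1 * (fst z * indicator S z) \<partial>NN) = k1 * (\<integral>z. fst z * indicator S z \<partial>NN)"
    by (rule integral_mult_right_zero)
  also have "(\<integral>z. k2 * (snd z * indicator S z) \<partial>NN) = k2 * (\<integral>z. snd z * indicator S z \<partial>NN)"
    by (rule integral_mult_right_zero)
  finally show ?thesis .
qed

lemma arith1:
  fixes s t mu nu ph Q r :: real
  assumes "s > 0" "t > 0" "mu < 0" "ph > 0"
    and "r < ((- mu / s) * (Q / ph) * (1 + nu / mu) - 1) * (s / t)"
  shows "(mu + nu) * Q + (s + t * r) * ph < 0"
proof -
  have e: "((- mu / s) * (Q / ph) * (1 + nu / mu) - 1) * (s / t) = (- (mu + nu) * Q - s * ph) / (t * ph)"
    using assms(1-4) by (simp add: field_simps)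
  have tp: "t * ph > 0" using assms by simp
  have "r * (t * ph) < - (mu + nu) * Q - s * ph"
    using assms(5) unfolding e by (simp add: pos_less_divide_eq[OF tp])
  then show ?thesis by (simp add: algebra_simps)
qed



theorem proposition3:
  fixes M :: "'a measure" and A :: "'a \<Rightarrow> bool" and U V :: "'a \<Rightarrow> real"
    and mu_u mu_v s_u s_v rho p_u p_v :: real
  assumes "prob_space M"
    and "A \<in> measurable M (count_space UNIV)"
    and "U \<in> borel_measurable M" and "V \<in> borel_measurable M"
    and "p_u = measure M {\<omega> \<in> space M. A \<omega>}"
    and "p_v = measure M {\<omega> \<in> space M. \<not> A \<omega>}"
    and "\<forall>B \<in> sets (borel :: (real \<times> real) measure).
           measure M {\<omega> \<in> space M. A \<omega> \<and> (U \<omega>, V \<omega>) \<in> B}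
         = measure M {\<omega> \<in> space M. A \<omega>} * measure M {\<omega> \<in> space M. (U \<omega>, V \<omega>) \<in> B}"
    and "distr M borel (\<lambda>\<omega>. (U \<omega>, V \<omega>)) = bivariate_normal mu_u mu_v s_u s_v rho"
    and "mu_u < 0" and "mu_v < 0" and "s_u > 0" and "s_v > 0"
    and "rho \<le> 1"
    and "-1 \<le> rho"
    and "rho < min
          (((- mu_u / s_u) * Mills (- mu_u / s_u) * (1 + mu_v / mu_u) - 1) * (s_u / s_v))
          (((- mu_v / s_v) * Mills (- mu_v / s_v) * (1 + mu_u / mu_v) - 1) * (s_v / s_u))"
  shows "(let g = (\<lambda>z_u z_v.
            p_u * measure M {\<omega> \<in> space M. U \<omega> > z_u}
              * ((\<integral>\<omega>. (U \<omega> + V \<omega>) * indicator {\<omega> \<in> space M. U \<omega> > z_u} \<omega> \<partial>M)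
                 / measure M {\<omega> \<in> space M. U \<omega> > z_u})
          + p_v * measure M {\<omega> \<in> space M. V \<omega> > z_v}
              * ((\<integral>\<omega>. (U \<omega> + V \<omega>) * indicator {\<omega> \<in> space M. V \<omega> > z_v} \<omega> \<partial>M)
                 / measure M {\<omega> \<in> space M. V \<omega> > z_v}))
         in g 0 0 < 0)"
proof -
  interpret M: prob_space M by fact
  define c where "c = sqrt (1 - rho\<^sup>2)"
  have r2: "rho\<^sup>2 \<le> 1" using assms(13,14) by (simp add: abs_square_le_1)
  have c2: "c\<^sup>2 = 1 - rho\<^sup>2" using r2 by (simp add: c_def)
  have rc: "rho\<^sup>2 + c\<^sup>2 = 1" using c2 by simp
  define a where "a = - mu_u / s_u"
  define b where "b = - mu_v / s_v"
  define T where "T = (\<lambda>(x::real, y::real). (mu_u + s_u * x, mu_v + s_v * (rho * x + sqrt (1 - rho\<^sup>2) * y)))"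
  have Tm: "T \<in> measurable NN borel"
    unfolding T_def by (simp add: measurable_cong_sets[OF NN_sets refl])
  have UVm: "(\<lambda>\<omega>. (U \<omega>, V \<omega>)) \<in> measurable M borel"
    using assms(3,4) by measurable
  have transfer: "(\<integral>\<omega>. h (U \<omega>, V \<omega>) \<partial>M) = (\<integral>z. h (T z) \<partial>NN)"
    if hm: "h \<in> borel_measurable borel" for h :: "real \<times> real \<Rightarrow> real"
  proof -
    have "(\<integral>\<omega>. h (U \<omega>, V \<omega>) \<partial>M) = integral\<^sup>L (distr M borel (\<lambda>\<omega>. (U \<omega>, V \<omega>))) h"
      by (rule integral_distr[symmetric, OF UVm hm])
    also have "\<dots> = integral\<^sup>L (distr NN borel T) h"
      using assms(8) unfolding bivariate_normal_def T_def by simp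
    also have "\<dots> = (\<integral>z. h (T z) \<partial>NN)"
      by (rule integral_distr[OF Tm hm])
    finally show ?thesis .
  qed
  let ?Su = "{\<omega> \<in> space M. 0 < U \<omega>}"
  let ?Sv = "{\<omega> \<in> space M. 0 < V \<omega>}"
  have Su: "?Su \<in> sets M" using assms(3) by measurable
  have Sv: "?Sv \<in> sets M" using assms(4) by measurable
  have keyu: "0 < mu_u + s_u * x \<longleftrightarrow> a < x" for x
  proof -
    have "a < x \<longleftrightarrow> - mu_u < x * s_u" unfolding a_def by (rule pos_divide_less_eq[OF assms(11)])
    moreover have "x * s_u = s_u * x" by (rule mult.commute)
    ultimately show ?thesis by linarith
  qed
  have keyv: "0 < mu_v + s_v * w \<longleftrightarrow> b < w" for w
  proof -
    have "b < w \<longleftrightarrow> - mu_v < w * s_v" unfolding b_def by (rule pos_divide_less_eq[OF assms(12)])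
    moreover have "w * s_v = s_v * w" by (rule mult.commute)
    ultimately show ?thesis by linarith
  qed
  define hu where "hu = (\<lambda>p::real \<times> real. (fst p + snd p) * (if 0 < fst p then 1 else 0))"
  define hv where "hv = (\<lambda>p::real \<times> real. (fst p + snd p) * (if 0 < snd p then 1 else 0))"
  have hum: "hu \<in> borel_measurable borel" unfolding hu_def borel_prod[symmetric] by measurable
  have hvm: "hv \<in> borel_measurable borel" unfolding hv_def borel_prod[symmetric] by measurable
  have Iu: "(\<integral>\<omega>. (U \<omega> + V \<omega>) * indicator ?Su \<omega> \<partial>M)
      = (mu_u + mu_v) * (1 - Phi a) + (s_u + s_v * rho) * std_normal_density a"
  proof -
    let ?S = "{z. a < 1 * fst z + 0 * snd z}"
    have "(\<integral>\<omega>. (U \<omega> + V \<omega>) * indicator ?Su \<omega> \<partial>M) = (\<integral>\<omega>. hu (U \<omega>, V \<omega>) \<partial>M)"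
      by (rule Bochner_Integration.integral_cong) (auto simp: hu_def indicator_def)
    also have "\<dots> = (\<integral>z. hu (T z) \<partial>NN)" by (rule transfer[OF hum])
    also have "\<dots> = (\<integral>z. ((mu_u + mu_v) + (s_u + s_v * rho) * fst z + (s_v * c) * snd z) * indicator ?S z \<partial>NN)"
    proof (rule Bochner_Integration.integral_cong[OF refl])
      fix z :: "real \<times> real"
      obtain x y where z: "z = (x, y)" by (cases z)
      have ind: "(if 0 < fst (T (x, y)) then 1 else 0) = (indicator ?S (x, y) :: real)"
        by (simp add: T_def indicator_def keyu)
      show "hu (T z) = ((mu_u + mu_v) + (s_u + s_v * rho) * fst z + (s_v * c) * snd z) * indicator ?S z"
        unfolding z hu_def ind by (simp add: T_def c_def algebra_simps)
    qed
    also have "\<dots> = (mu_u + mu_v) * measure NN ?S + (s_u + s_v * rho) * (\<integral>z. fst z * indicator ?S z \<partial>NN)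
        + (s_v * c) * (\<integral>z. snd z * indicator ?S z \<partial>NN)"
      by (rule lin[OF half_sets])
    also have "\<dots> = (mu_u + mu_v) * (1 - Phi a) + (s_u + s_v * rho) * (1 * std_normal_density a)
        + (s_v * c) * (0 * std_normal_density a)"
      using P_half[of 1 0 a] L[of 1 0 a] L2[of 1 0 a] by simp
    finally show ?thesis by simp
  qed
  have Iv: "(\<integral>\<omega>. (U \<omega> + V \<omega>) * indicator ?Sv \<omega> \<partial>M)
      = (mu_u + mu_v) * (1 - Phi b) + (s_v + s_u * rho) * std_normal_density b"
  proof -
    let ?S = "{z. b < rho * fst z + c * snd z}"
    have "(\<integral>\<omega>. (U \<omega> + V \<omega>) * indicator ?Sv \<omega> \<partial>M) = (\<integral>\<omega>. hv (U \<omega>, V \<omega>) \<partial>M)"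
      by (rule Bochner_Integration.integral_cong) (auto simp: hv_def indicator_def)
    also have "\<dots> = (\<integral>z. hv (T z) \<partial>NN)" by (rule transfer[OF hvm])
    also have "\<dots> = (\<integral>z. ((mu_u + mu_v) + (s_u + s_v * rho) * fst z + (s_v * c) * snd z) * indicator ?S z \<partial>NN)"
    proof (rule Bochner_Integration.integral_cong[OF refl])
      fix z :: "real \<times> real"
      obtain x y where z: "z = (x, y)" by (cases z)
      have ind: "(if 0 < snd (T (x, y)) then 1 else 0) = (indicator ?S (x, y) :: real)"
        by (simp add: T_def indicator_def keyv c_def)
      show "hv (T z) = ((mu_u + mu_v) + (s_u + s_v * rho) * fst z + (s_v * c) * snd z) * indicator ?S z"
        unfolding z hv_def ind by (simp add: T_def c_def algebra_simps)
    qed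
    also have "\<dots> = (mu_u + mu_v) * measure NN ?S + (s_u + s_v * rho) * (\<integral>z. fst z * indicator ?S z \<partial>NN)
        + (s_v * c) * (\<integral>z. snd z * indicator ?S z \<partial>NN)"
      by (rule lin[OF half_sets])
    also have "\<dots> = (mu_u + mu_v) * (1 - Phi b) + (s_u + s_v * rho) * (rho * std_normal_density b)
        + (s_v * c) * (c * std_normal_density b)"
      using P_half[OF rc, of b] L[OF rc, of b] L2[OF rc, of b] by simp
    also have "\<dots> = (mu_u + mu_v) * (1 - Phi b) + (s_u * rho + s_v * (rho\<^sup>2 + c\<^sup>2)) * std_normal_density b"
      by (simp add: algebra_simps power2_eq_square)
    finally show ?thesis using rc by simp
  qed
  have neg_u: "(mu_u + mu_v) * (1 - Phi a) + (s_u + s_v * rho) * std_normal_density a < 0"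
  proof (rule arith1[OF assms(11) assms(12) assms(9)])
    show "0 < std_normal_density a" by (rule normal_density_pos) simp
    show "rho < (- mu_u / s_u * ((1 - Phi a) / std_normal_density a) * (1 + mu_v / mu_u) - 1) * (s_u / s_v)"
      using assms(15) unfolding a_def Mills_def phi_def by simp
  qed
  have neg_v: "(mu_v + mu_u) * (1 - Phi b) + (s_v + s_u * rho) * std_normal_density b < 0"
  proof (rule arith1[OF assms(12) assms(11) assms(10)])
    show "0 < std_normal_density b" by (rule normal_density_pos) simp
    show "rho < (- mu_v / s_v * ((1 - Phi b) / std_normal_density b) * (1 + mu_u / mu_v) - 1) * (s_v / s_u)"
      using assms(15) unfolding b_def Mills_def phi_def by simp
  qed
  have SA: "{\<omega> \<in> space M. A \<omega>} \<in> sets M"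
    using assms(2) by (intro predE) (simp add: pred_def)
  have pp: "p_u + p_v = 1"
  proof -
    have "{\<omega> \<in> space M. \<not> A \<omega>} = space M - {\<omega> \<in> space M. A \<omega>}" by auto
    then have "p_v = 1 - p_u" using M.prob_compl[OF SA] assms(5,6) by simp
    then show ?thesis by simp
  qed
  have pu: "p_u \<ge> 0" using assms(5) by simp
  have pv: "p_v \<ge> 0" using assms(6) by simp
  define Iu' where "Iu' = (\<integral>\<omega>. (U \<omega> + V \<omega>) * indicator ?Su \<omega> \<partial>M)"
  define Iv' where "Iv' = (\<integral>\<omega>. (U \<omega> + V \<omega>) * indicator ?Sv \<omega> \<partial>M)"
  have iu: "Iu' < 0" unfolding Iu'_def Iu using neg_u by simp
  have iv: "Iv' < 0" unfolding Iv'_def Iv using neg_v by (simp add: add.commute)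
  have fin: "p_u * Iu' + p_v * Iv' < 0"
  proof (cases "p_u = 0")
    case True
    then have "p_v = 1" using pp by simp
    then show ?thesis using True iv by simp
  next
    case False
    then have "p_u > 0" using pu by simp
    then have "p_u * Iu' < 0" using iu by (simp add: mult_pos_neg)
    moreover have "p_v * Iv' \<le> 0" using pv iv by (simp add: mult_nonneg_nonpos)
    ultimately show ?thesis by simp
  qed
  show ?thesis
    unfolding Let_def
    using fin unfolding Iu'_def Iv'_def
    by (simp only: cancel_meas[OF assms(1) Su] cancel_meas[OF assms(1) Sv])
qed


end
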